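(* For $\phi_1,\phi_2\in D=\{z\in\mathbb{C};|z|<1\}$ with $\phi_1\ne-\phi_2$, define $$s(\phi_1,\phi_2)=\frac{|1-\phi_1\overline{\phi_2}|^2}{(1-|\phi_1\overline{\phi_2}|^2)^3}\rho^{-2}(1-\rho)^{-3/2}\operatorname{Im}(\phi_1\overline{\phi_2})(|\phi_1|^2-|\phi_2|^2)(1-|\phi_1|^2)(1-|\phi_2|^2),$$ with $\rho=|(1-|\phi_2|^2)\phi_1+(1-|\phi_1|^2)\phi_2|/(1-|\phi_1\overline{\phi_2}|^2)$; this is the skewness of the distribution on the unit circle $\partial D$ with density (w.r.t. arc length) $$f(z)=\frac{1}{2\pi}\frac{|1-\phi_1\overline{\phi_2}|^2}{1-|\phi_1\overline{\phi_2}|^2}\frac{1-|\phi_1|^2}{|z-\phi_1|^2}\frac{1-|\phi_2|^2}{|z-\phi_2|^2}.$$ Then, whenever the quantities involved are defined: (1) $s(\phi_1,\phi_2)=0$ if and only if the density $f$ is symmetric; (2) $s(\phi_1,\phi_2)>0$ ($<0$) if and only if $\operatorname{Im}(\phi_1\overline{\phi_2})(|\phi_1|-|\phi_2|)>0$ ($<0$); (3) for $\phi_1,\phi_2\ne0$, $s(\phi_1,\phi_2)=-s(\phi_1,\overline{\phi_2}\phi_1^2/|\phi_1|^2)=-s(\overline{\phi_1}\phi_2^2/|\phi_2|^2,\phi_2)$; (4) $s(\phi_2,\phi_1)=s(\phi_1,\phi_2)$; (5) $s(\overline{\phi_1},\overline{\phi_2})=-s(\phi_1,\phi_2)$; (6)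 $s(\alpha\phi_1,\alpha\phi_2)=s(\phi_1,\phi_2)$ for all $\alpha\in\partial D$; (7) if $\rho_1,\rho_2>0$ and $\sin(\mu_1-\mu_2)>0$ ($<0$), then $\lim_{\rho_1\to1}s(\rho_1\mathrm{e}^{\mathrm{i}\mu_1},\rho_2\mathrm{e}^{\mathrm{i}\mu_2})=\infty$ ($-\infty$).
   Context: For a random variable $Z$ on the unit circle with $E(Z)\neq0$, the skewness is $E[\operatorname{Im}\{(Z\mathrm{e}^{-\mathrm{i}\zeta})^2\}]/(1-\delta)^{3/2}$ with $\zeta=\arg E(Z)$ and $\delta=|E(Z)|$. *)

theory Defs
  imports Complex_Main
begin

definition unit_disc :: "complex set" where
  "unit_disc = {z. cmod z < 1}"

text \<open>The quantity rho (mean resultant length of the distribution).\<close>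
definition rho_p :: "complex \<Rightarrow> complex \<Rightarrow> real" where
  "rho_p p1 p2 =
     cmod (complex_of_real (1 - (cmod p2)\<^sup>2) * p1 + complex_of_real (1 - (cmod p1)\<^sup>2) * p2)
     / (1 - (cmod (p1 * cnj p2))\<^sup>2)"

definition skew :: "complex \<Rightarrow> complex \<Rightarrow> real" where
  "skew p1 p2 =
     (cmod (1 - p1 * cnj p2))\<^sup>2 / (1 - (cmod (p1 * cnj p2))\<^sup>2) ^ 3
     * (1 / (rho_p p1 p2)\<^sup>2) * (1 - rho_p p1 p2) powr (-3/2)
     * Im (p1 * cnj p2) * ((cmod p1)\<^sup>2 - (cmod p2)\<^sup>2)
     * (1 - (cmod p1)\<^sup>2) * (1 - (cmod p2)\<^sup>2)"

definition dens :: "complex \<Rightarrow> complex \<Rightarrow> complex \<Rightarrow> real" where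
  "dens p1 p2 z =
     1 / (2 * pi) * (cmod (1 - p1 * cnj p2))\<^sup>2 / (1 - (cmod (p1 * cnj p2))\<^sup>2)
     * (1 - (cmod p1)\<^sup>2) / (cmod (z - p1))\<^sup>2
     * (1 - (cmod p2)\<^sup>2) / (cmod (z - p2))\<^sup>2"

definition symmetric_circ :: "(complex \<Rightarrow> real) \<Rightarrow> bool" where
  "symmetric_circ f \<longleftrightarrow> (\<exists>\<zeta>::real. \<forall>t::real. f (cis (\<zeta> + t)) = f (cis (\<zeta> - t)))"

end

theory Submission
  imports Defs
begin


definition H :: "real \<Rightarrow> complex \<Rightarrow> real \<Rightarrow> real \<Rightarrow> real \<Rightarrow> real" where
  "H u w r a b = u\<^sup>2 / (1 - (cmod w)\<^sup>2) ^ 3 * (1 / r\<^sup>2) * (1 - r) powr (-3/2)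
     * Im w * (a\<^sup>2 - b\<^sup>2) * (1 - a\<^sup>2) * (1 - b\<^sup>2)"

lemma skew_H: "skew p1 p2 = H (cmod (1 - p1 * cnj p2)) (p1 * cnj p2) (rho_p p1 p2) (cmod p1) (cmod p2)"
  unfolding skew_def H_def by simp

lemma H_cnj: "H u (cnj w) r a b = - H u w r a b"
  unfolding H_def by simp

lemma H_alt: "H u w r a b = (u\<^sup>2 / (1 - (cmod w)\<^sup>2) ^ 3 * (1 / r\<^sup>2) * (1 - r) powr (-3/2)
     * Im w) * ((a\<^sup>2 - b\<^sup>2) * (1 - a\<^sup>2) * (1 - b\<^sup>2))"
  unfolding H_def by (simp only: mult.assoc)

lemma H_swap: "H u w r b a = - H u w r a b"
proof -
  have "(b\<^sup>2 - a\<^sup>2) * (1 - b\<^sup>2) * (1 - a\<^sup>2) = - ((a\<^sup>2 - b\<^sup>2) * (1 - a\<^sup>2) * (1 - b\<^sup>2))"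
    by (simp add: algebra_simps)
  then show ?thesis unfolding H_alt by simp
qed

lemma rho_sym: "rho_p p2 p1 = rho_p p1 p2"
  unfolding rho_p_def by (simp add: norm_mult add.commute mult.commute)

lemma rho_cnj: "rho_p (cnj p1) (cnj p2) = rho_p p1 p2"
proof -
  have "complex_of_real (1 - (cmod p2)\<^sup>2) * cnj p1 + complex_of_real (1 - (cmod p1)\<^sup>2) * cnj p2
     = cnj (complex_of_real (1 - (cmod p2)\<^sup>2) * p1 + complex_of_real (1 - (cmod p1)\<^sup>2) * p2)"
    by simp
  then show ?thesis unfolding rho_p_def by (simp only: complex_mod_cnj norm_mult) 
qed

lemma rho_rot: assumes "cmod \<alpha> = 1" shows "rho_p (\<alpha>*p1) (\<alpha>*p2) = rho_p p1 p2"
proof -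
  have "complex_of_real (1 - (cmod p2)\<^sup>2) * (\<alpha>*p1) + complex_of_real (1 - (cmod p1)\<^sup>2) * (\<alpha>*p2)
     = \<alpha> * (complex_of_real (1 - (cmod p2)\<^sup>2) * p1 + complex_of_real (1 - (cmod p1)\<^sup>2) * p2)"
    by (simp add: algebra_simps)
  then show ?thesis unfolding rho_p_def using assms by (simp add: norm_mult)
qed

lemma skew_sym: "skew p2 p1 = skew p1 p2"
proof -
  have e1: "p2 * cnj p1 = cnj (p1 * cnj p2)" by simp
  have e2: "cmod (1 - cnj (p1 * cnj p2)) = cmod (1 - p1 * cnj p2)"
    by (metis complex_cnj_diff complex_cnj_one complex_mod_cnj)
  have "skew p2 p1 = H (cmod (1 - p1 * cnj p2)) (cnj (p1 * cnj p2)) (rho_p p1 p2) (cmod p2) (cmod p1)"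
    unfolding skew_H rho_sym[of p2 p1] by (simp only: e1 e2)
  also have "\<dots> = - H (cmod (1 - p1 * cnj p2)) (p1 * cnj p2) (rho_p p1 p2) (cmod p2) (cmod p1)"
    by (rule H_cnj)
  also have "\<dots> = skew p1 p2" by (subst H_swap) (simp add: skew_H)
  finally show ?thesis .
qed

lemma skew_cnj: "skew (cnj p1) (cnj p2) = - skew p1 p2"
proof -
  have "cnj p1 * cnj (cnj p2) = cnj (p1 * cnj p2)" by simp
  moreover have "cmod (1 - cnj (p1 * cnj p2)) = cmod (1 - p1 * cnj p2)"
    by (metis complex_cnj_diff complex_cnj_one complex_mod_cnj)
  ultimately show ?thesis unfolding skew_H rho_cnj complex_mod_cnj
    by (simp only: H_cnj)
qed

lemma skew_rot: assumes "cmod \<alpha> = 1" shows "skew (\<alpha>*p1) (\<alpha>*p2) = skew p1 p2"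
proof -
  have "\<alpha> * cnj \<alpha> = 1" using assms complex_norm_square[of \<alpha>] by simp
  then have "\<alpha> * p1 * cnj (\<alpha> * p2) = p1 * cnj p2"
    by (metis (no_types, lifting) ab_semigroup_mult_class.mult_ac(1) complex_cnj_mult mult.left_commute mult_1)
  note e = this
  show ?thesis unfolding skew_H rho_rot[OF assms] e norm_mult assms by simp
qed

lemma skew_refl: assumes "p1 \<noteq> 0"
  shows "skew p1 (cnj p2 * p1\<^sup>2 / complex_of_real ((cmod p1)\<^sup>2)) = - skew p1 p2"
proof -
  define q where "q = cnj p2 * p1\<^sup>2 / complex_of_real ((cmod p1)\<^sup>2)"
  have c: "cnj p1 \<noteq> 0" using assms by simp
  have n: "complex_of_real ((cmod p1)\<^sup>2) = p1 * cnj p1" by (metis complex_norm_square)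
  have q: "q = (p1 / cnj p1) * cnj p2" unfolding q_def n using c by (simp add: power2_eq_square field_simps)
  have u: "cmod (p1 / cnj p1) = 1" using assms by (simp add: norm_divide)
  have mq: "cmod q = cmod p2" unfolding q norm_mult u by simp
  have w: "p1 * cnj q = cnj (p1 * cnj p2)" unfolding q using c by (simp add: field_simps)
  have "complex_of_real (1 - (cmod q)\<^sup>2) * p1 + complex_of_real (1 - (cmod p1)\<^sup>2) * q
      = (p1 / cnj p1) * cnj (complex_of_real (1 - (cmod p2)\<^sup>2) * p1 + complex_of_real (1 - (cmod p1)\<^sup>2) * p2)"
    unfolding mq unfolding q using c by (simp add: field_simps)
  then have "cmod (complex_of_real (1 - (cmod q)\<^sup>2) * p1 + complex_of_real (1 - (cmod p1)\<^sup>2) * q)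
    = cmod (complex_of_real (1 - (cmod p2)\<^sup>2) * p1 + complex_of_real (1 - (cmod p1)\<^sup>2) * p2)"
    by (simp only: norm_mult u complex_mod_cnj mult_1)
  moreover have "cmod (p1 * cnj q) = cmod (p1 * cnj p2)" unfolding w complex_mod_cnj ..
  ultimately have r: "rho_p p1 q = rho_p p1 p2" unfolding rho_p_def by simp
  have "cmod (1 - cnj (p1 * cnj p2)) = cmod (1 - p1 * cnj p2)"
    by (metis complex_cnj_diff complex_cnj_one complex_mod_cnj)
  then show ?thesis unfolding q_def[symmetric] skew_H r w mq by (simp only: H_cnj)
qed



lemma cm: "0 \<le> t \<Longrightarrow> cmod (complex_of_real t) = t" by simp

lemma one_m_sq: "0 \<le> (x::real) \<Longrightarrow> x < 1 \<Longrightarrow> 0 \<le> 1 - x\<^sup>2"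
  by (simp add: power_le_one)

lemma sq_lt1: "0 \<le> (x::real) \<Longrightarrow> x < 1 \<Longrightarrow> x\<^sup>2 < 1"
  using power_less_one_iff[of x 2] by simp

lemma D_pos: assumes "p1 \<in> unit_disc" "p2 \<in> unit_disc"
  shows "0 < 1 - (cmod (p1 * cnj p2))\<^sup>2" "cmod (p1 * cnj p2) < 1"
proof -
  have a: "cmod p1 < 1" "cmod p2 < 1" using assms unfolding unit_disc_def by auto
  have "cmod (p1 * cnj p2) = cmod p1 * cmod p2" by (simp add: norm_mult)
  also have "\<dots> \<le> cmod p1" using a by (simp add: mult_left_le)
  also have "\<dots> < 1" using a by simp
  finally show "cmod (p1 * cnj p2) < 1" .
  then show "0 < 1 - (cmod (p1 * cnj p2))\<^sup>2"
    by (simp add: power_less_one_iff)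
qed

lemma N_lt_D: assumes "p1 \<in> unit_disc" "p2 \<in> unit_disc"
  shows "cmod (complex_of_real (1 - (cmod p2)\<^sup>2) * p1 + complex_of_real (1 - (cmod p1)\<^sup>2) * p2)
     < 1 - (cmod (p1 * cnj p2))\<^sup>2"
proof -
  define x where "x = cmod p1"
  define y where "y = cmod p2"
  have a: "x < 1" "y < 1" "0 \<le> x" "0 \<le> y" using assms unfolding unit_disc_def x_def y_def by auto
  have "cmod (complex_of_real (1 - (cmod p2)\<^sup>2) * p1 + complex_of_real (1 - (cmod p1)\<^sup>2) * p2)
     \<le> cmod (complex_of_real (1 - (cmod p2)\<^sup>2) * p1) + cmod (complex_of_real (1 - (cmod p1)\<^sup>2) * p2)"
    by (rule norm_triangle_ineq)
  also have "\<dots> = (1 - y\<^sup>2) * x + (1 - x\<^sup>2) * y"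
    unfolding norm_mult x_def y_def using a unfolding x_def y_def
    by (simp only: cm[OF one_m_sq])
  also have "\<dots> = (x + y) * (1 - x*y)" by (simp add: algebra_simps power2_eq_square)
  also have "\<dots> < (1 + x*y) * (1 - x*y)"
  proof (rule mult_strict_right_mono)
    have "(1-x)*(1-y) > 0" using a by simp
    moreover have "(1-x)*(1-y) = 1 - x - y + x*y" by (simp add: algebra_simps)
    ultimately show "x + y < 1 + x * y" by linarith
    have "x * y \<le> x" using a by (simp add: mult_left_le)
    then show "0 < 1 - x*y" using a by linarith
  qed
  also have "\<dots> = 1 - (cmod (p1 * cnj p2))\<^sup>2"
    by (simp add: norm_mult x_def y_def algebra_simps power2_eq_square)
  finally show ?thesis .
qed

lemma N_pos: assumes "p1 \<in> unit_disc" "p2 \<in> unit_disc" "p1 \<noteq> - p2"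
  shows "0 < cmod (complex_of_real (1 - (cmod p2)\<^sup>2) * p1 + complex_of_real (1 - (cmod p1)\<^sup>2) * p2)"
proof (rule ccontr)
  define x where "x = cmod p1"
  define y where "y = cmod p2"
  have a: "x < 1" "y < 1" "0 \<le> x" "0 \<le> y" using assms unfolding unit_disc_def x_def y_def by auto
  assume "\<not> ?thesis"
  then have eq: "complex_of_real (1 - y\<^sup>2) * p1 = - (complex_of_real (1 - x\<^sup>2) * p2)"
    unfolding x_def y_def by (simp add: add_eq_0_iff)
  then have "cmod (complex_of_real (1 - y\<^sup>2) * p1) = cmod (complex_of_real (1 - x\<^sup>2) * p2)"
    by (metis norm_minus_cancel)
  then have "(1 - y\<^sup>2) * x = (1 - x\<^sup>2) * y"
    unfolding norm_mult x_def y_def using a unfolding x_def y_def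
    by (simp only: cm[OF one_m_sq])
  then have "(x - y) * (1 + x*y) = 0" by (simp add: algebra_simps power2_eq_square)
  moreover have "1 + x*y > 0" using a by (simp add: add_pos_nonneg)
  ultimately have xy: "x = y" by simp
  have "complex_of_real (1 - x\<^sup>2) * p1 = - (complex_of_real (1 - x\<^sup>2) * p2)"
    using eq unfolding xy .
  then have "complex_of_real (1 - x\<^sup>2) * (p1 + p2) = 0"
    unfolding distrib_left by (simp only: neg_eq_iff_add_eq_0 add.commute add.right_inverse)
  moreover have "1 - x\<^sup>2 \<noteq> 0" using a sq_lt1[of x] by simp
  ultimately have "p1 + p2 = 0" by (metis mult_eq_0_iff of_real_eq_0_iff)
  then show False using assms(3) by (simp add: add_eq_0_iff)
qed

lemma rho_bounds: assumes "p1 \<in> unit_disc" "p2 \<in> unit_disc" "p1 \<noteq> - p2"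
  shows "0 < rho_p p1 p2" "rho_p p1 p2 < 1"
  unfolding rho_p_def using N_pos[OF assms] N_lt_D[OF assms(1,2)] D_pos[OF assms(1,2)]
  by (simp_all only: divide_pos_pos divide_less_eq_1_pos)

lemma skew_K: assumes "p1 \<in> unit_disc" "p2 \<in> unit_disc" "p1 \<noteq> - p2"
  shows "\<exists>K>0. skew p1 p2 = K * (Im (p1 * cnj p2) * ((cmod p1)\<^sup>2 - (cmod p2)\<^sup>2))"
proof -
  have a: "cmod p1 < 1" "cmod p2 < 1" using assms unfolding unit_disc_def by auto
  note D = D_pos[OF assms(1,2)] and R = rho_bounds[OF assms]
  have u: "cmod (1 - p1 * cnj p2) > 0" using D(2) by auto
  define K where "K = (cmod (1 - p1 * cnj p2))\<^sup>2 / (1 - (cmod (p1 * cnj p2))\<^sup>2) ^ 3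
     * (1 / (rho_p p1 p2)\<^sup>2) * (1 - rho_p p1 p2) powr (-3/2) * (1 - (cmod p1)\<^sup>2) * (1 - (cmod p2)\<^sup>2)"
  have p1: "1 - (cmod p1)\<^sup>2 > 0" "1 - (cmod p2)\<^sup>2 > 0" using a
    using sq_lt1[of "cmod p1"] sq_lt1[of "cmod p2"] by simp_all
  have "K > 0" unfolding K_def using u D R p1 by simp
  moreover have "skew p1 p2 = K * (Im (p1 * cnj p2) * ((cmod p1)\<^sup>2 - (cmod p2)\<^sup>2))"
    unfolding skew_def K_def by (simp only: mult.assoc mult.commute mult.left_commute)
  ultimately show ?thesis by blast
qed



lemma alg:
  fixes x1 y1 x2 y2 u v :: real
  assumes e1: "(1+u)*y2 + (1+v)*y1 = 0" and e2: "x1*y2 + x2*y1 = 0"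
    and u: "u = x1\<^sup>2 + y1\<^sup>2" and v: "v = x2\<^sup>2 + y2\<^sup>2" and "u < 1" "v < 1"
  shows "(y1*x2 - x1*y2)*(u - v) = 0"
proof (cases "y1 = 0")
  case True
  have "1 + u > 0" using u by (simp add: add_pos_nonneg)
  then have "y2 = 0" using e1 True by simp
  then show ?thesis using True by simp
next
  case False
  have uv0: "0 \<le> u" "0 \<le> v" using u v by simp_all
  have "u * y2\<^sup>2 = (x1*y2)\<^sup>2 + y1\<^sup>2*y2\<^sup>2" using u by (simp add: algebra_simps power2_eq_square)
  also have "(x1*y2)\<^sup>2 = (x2*y1)\<^sup>2" using e2 by (simp add: eq_neg_iff_add_eq_0[symmetric] power2_eq_square)
  finally have a: "u * y2\<^sup>2 = v * y1\<^sup>2" using v by (simp add: algebra_simps power2_eq_square)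
  have "((1+u)*y2)\<^sup>2 = ((1+v)*y1)\<^sup>2" using e1 by (simp add: eq_neg_iff_add_eq_0[symmetric] power2_eq_square)
  then have b: "(1+u)\<^sup>2*y2\<^sup>2 = (1+v)\<^sup>2*y1\<^sup>2" by (simp add: power_mult_distrib)
  have "u*(1+v)\<^sup>2*y1\<^sup>2 = (1+u)\<^sup>2*(u*y2\<^sup>2)" using b by (simp add: algebra_simps)
  also have "\<dots> = (1+u)\<^sup>2*v*y1\<^sup>2" using a by simp
  finally have "(u*(1+v)\<^sup>2 - (1+u)\<^sup>2*v) * y1\<^sup>2 = 0" by (simp add: algebra_simps)
  then have "u*(1+v)\<^sup>2 - (1+u)\<^sup>2*v = 0" using False by simp
  then have "(u - v)*(1 - u*v) = 0" by (simp add: algebra_simps power2_eq_square)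
  moreover have "u*v < 1"
  proof -
    have "u*v \<le> u" using uv0 \<open>v<1\<close> by (simp add: mult_left_le)
    then show ?thesis using \<open>u<1\<close> by linarith
  qed
  ultimately show ?thesis by simp
qed



definition Cd :: "complex \<Rightarrow> complex \<Rightarrow> real" where
  "Cd p1 p2 = 1 / (2 * pi) * (cmod (1 - p1 * cnj p2))\<^sup>2 / (1 - (cmod (p1 * cnj p2))\<^sup>2)
     * (1 - (cmod p1)\<^sup>2) * (1 - (cmod p2)\<^sup>2)"

lemma dens_alt: "dens p1 p2 z = Cd p1 p2 / ((cmod (z - p1))\<^sup>2 * (cmod (z - p2))\<^sup>2)"
  unfolding dens_def Cd_def by (simp only: times_divide_eq_left times_divide_eq_right divide_divide_eq_left mult.assoc mult.commute mult.left_commute)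

lemma Cd_pos: assumes "p1 \<in> unit_disc" "p2 \<in> unit_disc" shows "Cd p1 p2 > 0"
proof -
  have a: "cmod p1 < 1" "cmod p2 < 1" using assms unfolding unit_disc_def by auto
  have "1 - (cmod p1)\<^sup>2 > 0" "1 - (cmod p2)\<^sup>2 > 0"
    using sq_lt1[of "cmod p1"] sq_lt1[of "cmod p2"] a by simp_all
  moreover have "cmod (1 - p1 * cnj p2) > 0" using D_pos(2)[OF assms] by auto
  ultimately show ?thesis unfolding Cd_def using D_pos(1)[OF assms] by simp
qed

definition G :: "complex \<Rightarrow> complex \<Rightarrow> real \<Rightarrow> real" where
  "G w1 w2 t = (cmod (cis t - w1))\<^sup>2 * (cmod (cis t - w2))\<^sup>2"

lemma rot_norm: "cmod (cis (z + t) - p) = cmod (cis t - p * cis (-z))"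
proof -
  have "cis (z + t) - p = cis z * (cis t - p * cis (-z))"
  proof -
    have "cis z * cis (-z) = 1" by (simp add: cis_mult)
    then show ?thesis by (simp add: algebra_simps cis_mult)
  qed
  then show ?thesis by (simp add: norm_mult)
qed

lemma dens_G: "dens p1 p2 (cis (z + t)) = Cd p1 p2 / G (p1 * cis (-z)) (p2 * cis (-z)) t"
  unfolding dens_alt G_def rot_norm ..

lemma sym_G: assumes "p1 \<in> unit_disc" "p2 \<in> unit_disc" "symmetric_circ (dens p1 p2)"
  shows "\<exists>z. \<forall>t. G (p1 * cis (-z)) (p2 * cis (-z)) t = G (p1 * cis (-z)) (p2 * cis (-z)) (-t)"
proof -
  obtain z where z: "\<forall>t. dens p1 p2 (cis (z + t)) = dens p1 p2 (cis (z - t))"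
    using assms(3) unfolding symmetric_circ_def by blast
  have "\<forall>t. G (p1 * cis (-z)) (p2 * cis (-z)) t = G (p1 * cis (-z)) (p2 * cis (-z)) (-t)"
  proof
    fix t
    have "dens p1 p2 (cis (z + t)) = dens p1 p2 (cis (z + -t))" using z by simp
    then show "G (p1 * cis (-z)) (p2 * cis (-z)) t = G (p1 * cis (-z)) (p2 * cis (-z)) (-t)"
      unfolding dens_G using Cd_pos[OF assms(1,2)] by (simp add: divide_cancel_left)
  qed
  then show ?thesis by blast
qed

lemma G_sym: assumes "\<forall>t. G (p1 * cis (-z)) (p2 * cis (-z)) t = G (p1 * cis (-z)) (p2 * cis (-z)) (-t)"
  shows "symmetric_circ (dens p1 p2)"
  unfolding symmetric_circ_def
proof (intro exI allI)
  fix t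
  have "dens p1 p2 (cis (z + t)) = dens p1 p2 (cis (z + -t))"
    unfolding dens_G using assms by simp
  then show "dens p1 p2 (cis (z + t)) = dens p1 p2 (cis (z - t))" by simp
qed

lemma norm_cnj_cis: "cmod (cis (-t) - w) = cmod (cis t - cnj w)"
proof -
  have "cis (-t) - w = cnj (cis t - cnj w)" by (simp add: cis_cnj)
  then show ?thesis by (metis complex_mod_cnj)
qed

lemma G_conj_pair: assumes "(cnj w1 = w1 \<and> cnj w2 = w2) \<or> cnj w1 = w2"
  shows "G w1 w2 t = G w1 w2 (-t)"
  using assms unfolding G_def norm_cnj_cis
  by (auto simp: mult.commute)



lemma G_re: "G w1 w2 t = ((cos t - Re w1)\<^sup>2 + (sin t - Im w1)\<^sup>2) * ((cos t - Re w2)\<^sup>2 + (sin t - Im w2)\<^sup>2)"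
  unfolding G_def by (simp add: cmod_power2)

lemma m4: "0 = -4 * (s::real) \<Longrightarrow> s = 0" by simp
lemma m4h: "0 = -4 * h * (s::real) \<Longrightarrow> h > 0 \<Longrightarrow> s = 0" by simp

lemma G_sym_imp:
  assumes "\<forall>t. G w1 w2 t = G w1 w2 (-t)" "cmod w1 < 1" "cmod w2 < 1"
  shows "Im (w1 * cnj w2) * ((cmod w1)\<^sup>2 - (cmod w2)\<^sup>2) = 0"
proof -
  define x1 where "x1 = Re w1"
  define y1 where "y1 = Im w1"
  define x2 where "x2 = Re w2"
  define y2 where "y2 = Im w2"
  define u where "u = x1\<^sup>2 + y1\<^sup>2"
  define v where "v = x2\<^sup>2 + y2\<^sup>2"
  define h where "h = sqrt 3 / 2"
  have hh: "h\<^sup>2 = 3/4" unfolding h_def by (simp add: power_divide)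
  have hp: "h > 0" unfolding h_def by simp
  have cu: "(cmod w1)\<^sup>2 = u" "(cmod w2)\<^sup>2 = v" unfolding u_def v_def x1_def y1_def x2_def y2_def
    by (simp_all add: cmod_power2)
  have "G w1 w2 (pi/2) = G w1 w2 (-(pi/2))" using assms(1) by blast
  then have E1: "(x1\<^sup>2 + (1 - y1)\<^sup>2) * (x2\<^sup>2 + (1 - y2)\<^sup>2) = (x1\<^sup>2 + (-1 - y1)\<^sup>2) * (x2\<^sup>2 + (-1 - y2)\<^sup>2)"
    unfolding G_re x1_def y1_def x2_def y2_def by simp
  have "(x1\<^sup>2 + (1 - y1)\<^sup>2) * (x2\<^sup>2 + (1 - y2)\<^sup>2) - (x1\<^sup>2 + (-1 - y1)\<^sup>2) * (x2\<^sup>2 + (-1 - y2)\<^sup>2)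
     = -4 * ((1+u)*y2 + (1+v)*y1)"
    unfolding u_def v_def by (simp add: algebra_simps power2_eq_square)
  then have "0 = -4 * ((1+u)*y2 + (1+v)*y1)" unfolding E1 by (simp only: diff_self)
  then have e1: "(1+u)*y2 + (1+v)*y1 = 0" by (rule m4)
  have "G w1 w2 (pi/3) = G w1 w2 (-(pi/3))" using assms(1) by blast
  then have E2: "((1/2 - x1)\<^sup>2 + (h - y1)\<^sup>2) * ((1/2 - x2)\<^sup>2 + (h - y2)\<^sup>2)
      = ((1/2 - x1)\<^sup>2 + (-h - y1)\<^sup>2) * ((1/2 - x2)\<^sup>2 + (-h - y2)\<^sup>2)"
    unfolding G_re x1_def y1_def x2_def y2_def h_def by (simp add: cos_60 sin_60)
  have "((1/2 - x1)\<^sup>2 + (h - y1)\<^sup>2) * ((1/2 - x2)\<^sup>2 + (h - y2)\<^sup>2)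
      - ((1/2 - x1)\<^sup>2 + (-h - y1)\<^sup>2) * ((1/2 - x2)\<^sup>2 + (-h - y2)\<^sup>2)
      = -4 * h * ((1/4 + h\<^sup>2 - x1 + u) * y2 + (1/4 + h\<^sup>2 - x2 + v) * y1)"
    unfolding u_def v_def by (simp add: algebra_simps power2_eq_square)
  then have "0 = -4 * h * ((1/4 + h\<^sup>2 - x1 + u) * y2 + (1/4 + h\<^sup>2 - x2 + v) * y1)"
    unfolding E2 by (simp only: diff_self)
  from m4h[OF this hp] have "(1/4 + h\<^sup>2 - x1 + u) * y2 + (1/4 + h\<^sup>2 - x2 + v) * y1 = 0" .
  then have "(1 - x1 + u) * y2 + (1 - x2 + v) * y1 = 0" unfolding hh by simp
  moreover have "(1 - x1 + u) * y2 + (1 - x2 + v) * y1 = ((1+u)*y2 + (1+v)*y1) - (x1*y2 + x2*y1)"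
    by (simp add: algebra_simps)
  ultimately have e2: "x1*y2 + x2*y1 = 0" using e1 by linarith
  have "u < 1" "v < 1" using cu assms(2,3) sq_lt1[of "cmod w1"] sq_lt1[of "cmod w2"] by auto
  from alg[OF e1 e2 u_def v_def this] have "(y1*x2 - x1*y2)*(u - v) = 0" .
  moreover have "Im (w1 * cnj w2) = y1*x2 - x1*y2" unfolding x1_def y1_def x2_def y2_def by simp
  ultimately show ?thesis using cu by simp
qed



lemma polar: "\<exists>a. p = complex_of_real (cmod p) * cis a"
proof -
  obtain r a where p: "p = rcis r a" using rcis_Ex by blast
  show ?thesis
  proof (cases "r \<ge> 0")
    case True
    have "cmod p = r" using p True by simp
    then show ?thesis using p by (auto simp: rcis_def)
  next
    case False
    have "cis (a + pi) = - cis a" by (simp add: cis_mult[symmetric])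
    moreover have "cmod p = - r" using p False by simp
    ultimately have "p = complex_of_real (cmod p) * cis (a + pi)" using p by (simp add: rcis_def)
    then show ?thesis by blast
  qed
qed

lemma rot_inv: "cmod (p * cis (-z)) = cmod p"
  "(p1 * cis (-z)) * cnj (p2 * cis (-z)) = p1 * cnj p2"
proof -
  show "cmod (p * cis (-z)) = cmod p" by (simp add: norm_mult)
  have "cis (-z) * cnj (cis (-z)) = 1" by (simp add: cis_cnj cis_mult)
  then show "(p1 * cis (-z)) * cnj (p2 * cis (-z)) = p1 * cnj p2"
    by (metis (no_types, lifting) complex_cnj_mult mult.assoc mult.left_commute mult_1_right)
qed

lemma sym_imp_zero: assumes "p1 \<in> unit_disc" "p2 \<in> unit_disc" "symmetric_circ (dens p1 p2)"
  shows "Im (p1 * cnj p2) * ((cmod p1)\<^sup>2 - (cmod p2)\<^sup>2) = 0"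
proof -
  obtain z where z: "\<forall>t. G (p1 * cis (-z)) (p2 * cis (-z)) t = G (p1 * cis (-z)) (p2 * cis (-z)) (-t)"
    using sym_G[OF assms] by blast
  have "cmod (p1 * cis (-z)) < 1" "cmod (p2 * cis (-z)) < 1"
    using assms(1,2) unfolding rot_inv unit_disc_def by auto
  from G_sym_imp[OF z this] show ?thesis unfolding rot_inv .
qed

lemma real_cnj: "Im w = 0 \<Longrightarrow> cnj w = w" by (simp add: complex_eq_iff)

lemma zero_imp_sym: assumes "Im (p1 * cnj p2) * ((cmod p1)\<^sup>2 - (cmod p2)\<^sup>2) = 0"
  shows "symmetric_circ (dens p1 p2)"
proof -
  have "\<exists>z. (cnj (p1 * cis (-z)) = p1 * cis (-z) \<and> cnj (p2 * cis (-z)) = p2 * cis (-z))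
         \<or> cnj (p1 * cis (-z)) = p2 * cis (-z)"
  proof (cases "Im (p1 * cnj p2) = 0")
    case True
    show ?thesis
    proof (cases "p1 = 0")
      case True
      obtain a where a: "p2 = complex_of_real (cmod p2) * cis a" using polar by blast
      have "p2 * cis (-a) = complex_of_real (cmod p2)"
        by (subst a) (simp add: mult.assoc cis_mult)
      then have c2: "cnj (p2 * cis (-a)) = p2 * cis (-a)" by simp
      have c1: "cnj (p1 * cis (-a)) = p1 * cis (-a)" using True by simp
      show ?thesis using c1 c2 by blast
    next
      case False
      obtain a where a: "p1 = complex_of_real (cmod p1) * cis a" using polar by blast
      have w1: "p1 * cis (-a) = complex_of_real (cmod p1)"
        by (subst a) (simp add: mult.assoc cis_mult)
      have "Im ((p1 * cis (-a)) * cnj (p2 * cis (-a))) = 0" unfolding rot_inv using True .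
      then have "cmod p1 * Im (p2 * cis (-a)) = 0" unfolding w1 by (simp; linarith)
      then have "Im (p2 * cis (-a)) = 0" using False by simp
      then have c2: "cnj (p2 * cis (-a)) = p2 * cis (-a)" by (rule real_cnj)
      have c1: "cnj (p1 * cis (-a)) = p1 * cis (-a)" unfolding w1 by simp
      show ?thesis using c1 c2 by blast
    qed
  next
    case False
    with assms have "(cmod p1)\<^sup>2 = (cmod p2)\<^sup>2" by simp
    then have r: "cmod p1 = cmod p2" by (simp add: power2_eq_iff_nonneg)
    obtain a1 where a1: "p1 = complex_of_real (cmod p1) * cis a1" using polar by blast
    obtain a2 where a2: "p2 = complex_of_real (cmod p1) * cis a2" using polar r by metis
    define z where "z = (a1 + a2) / 2"
    have w1: "p1 * cis (-z) = complex_of_real (cmod p1) * cis ((a1 - a2)/2)"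
      by (subst a1) (simp add: mult.assoc cis_mult z_def field_simps)
    have w2: "p2 * cis (-z) = complex_of_real (cmod p1) * cis ((a2 - a1)/2)"
      by (subst a2) (simp add: mult.assoc cis_mult z_def field_simps)
    have m: "-((a1 - a2)/2) = (a2 - a1)/2" by (simp only: minus_divide_left minus_diff_eq)
    have "cnj (p1 * cis (-z)) = p2 * cis (-z)" unfolding w1 w2 complex_cnj_mult cis_cnj m by simp
    then show ?thesis by blast
  qed
  then obtain z where "(cnj (p1 * cis (-z)) = p1 * cis (-z) \<and> cnj (p2 * cis (-z)) = p2 * cis (-z))
         \<or> cnj (p1 * cis (-z)) = p2 * cis (-z)" by blast
  from G_conj_pair[OF this] show ?thesis by (intro G_sym) blast
qed



lemma lim_root: "filterlim (\<lambda>r::real. (1 - r) powr (-1/2)) at_top (at_left 1)"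
  unfolding filterlim_at_top
proof
  fix Z :: real
  define m where "m = max Z 1"
  define d where "d = m powr (-2)"
  have m: "m > 0" "Z \<le> m" unfolding m_def by auto
  have d: "d > 0" unfolding d_def using m by simp
  have dm: "d powr (-1/2) = m" unfolding d_def using m by (simp add: powr_powr)
  have "eventually (\<lambda>r. r \<in> {1 - d<..<1}) (at_left (1::real))"
    by (rule eventually_at_left_real) (use d in simp)
  then show "eventually (\<lambda>r. Z \<le> (1 - r) powr (-1/2)) (at_left 1)"
  proof (rule eventually_mono)
    fix r assume r: "r \<in> {1 - d<..<1}"
    have "d powr (-1/2) \<le> (1 - r) powr (-1/2)"
      by (rule powr_mono2') (use r in auto)
    then show "Z \<le> (1 - r) powr (-1/2)" using dm m by simp
  qed
qed

lemma prod6_mono: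
  fixes a1 a2 a3 a4 a5 a6 b1 b2 b3 b4 b5 b6 :: real
  assumes "0 \<le> a1" "a1 \<le> b1" "0 \<le> a2" "a2 \<le> b2" "0 \<le> a3" "a3 \<le> b3"
    "0 \<le> a4" "a4 \<le> b4" "0 \<le> a5" "a5 \<le> b5" "0 \<le> a6" "a6 \<le> b6"
  shows "a1 * a2 * a3 * a4 * a5 * a6 \<le> b1 * b2 * b3 * b4 * b5 * b6"
  using assms by (intro mult_mono mult_nonneg_nonneg) (auto intro: order_trans)

lemma lim_bound:
  fixes r r2 mu1 mu2 :: real
  defines "p1 \<equiv> complex_of_real r * cis mu1" and "p2 \<equiv> complex_of_real r2 * cis mu2"
  assumes r2: "0 < r2" "r2 < 1" and s: "sin (mu1 - mu2) > 0"
    and r: "(1 + r2) / 2 \<le> r" "r < 1"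
  shows "((1 - r2)\<^sup>2 * 1 * (r2 * sin (mu1 - mu2) / 2) * ((1 - r2) / 4) * (1 - r2\<^sup>2)
            * ((1 + r2) / (1 - r2)) powr (-3/2)) * (1 - r) powr (-1/2) \<le> skew p1 p2"
proof -
  define C where "C = (1 + r2) / (1 - r2)"
  have C: "C > 0" unfolding C_def using r2 by simp
  have rpos: "r > 0" "r > r2" "r \<ge> 1/2" using r r2 by (auto simp: field_simps)
  have n1: "cmod p1 = r" unfolding p1_def using rpos by (simp add: norm_mult)
  have n2: "cmod p2 = r2" unfolding p2_def using r2 by (simp add: norm_mult)
  have d1: "p1 \<in> unit_disc" "p2 \<in> unit_disc" unfolding unit_disc_def using n1 n2 r r2 by auto
  have ne: "p1 \<noteq> - p2"
  proof
    assume "p1 = - p2"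
    then have "cmod p1 = cmod p2" by simp
    with n1 n2 rpos show False by simp
  qed
  note R = rho_bounds[OF d1 ne]
  have w: "p1 * cnj p2 = complex_of_real (r * r2) * cis (mu1 - mu2)"
  proof -
    have "p1 * cnj p2 = complex_of_real r * cis mu1 * (complex_of_real r2 * cis (-mu2))"
      unfolding p1_def p2_def by (simp add: cis_cnj)
    also have "\<dots> = complex_of_real (r * r2) * (cis mu1 * cis (-mu2))" by (simp add: mult_ac)
    also have "cis mu1 * cis (-mu2) = cis (mu1 - mu2)" by (simp add: cis_mult)
    finally show ?thesis .
  qed
  have Im: "Im (p1 * cnj p2) = r * r2 * sin (mu1 - mu2)" unfolding w by simp
  have nw: "cmod (p1 * cnj p2) = r * r2" unfolding w using rpos r2 by (simp add: norm_mult)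
  define D where "D = 1 - (cmod (p1 * cnj p2))\<^sup>2"
  define N where "N = cmod (complex_of_real (1 - (cmod p2)\<^sup>2) * p1 + complex_of_real (1 - (cmod p1)\<^sup>2) * p2)"
  have rho: "rho_p p1 p2 = N / D" unfolding rho_p_def N_def D_def ..
  have rr2: "r * r2 \<le> r2" using r2 r by (simp add: mult_left_le_one_le)
  have rr2': "r * r2 \<ge> 0" using rpos r2 by simp
  have D: "D = 1 - (r * r2)\<^sup>2" unfolding D_def nw ..
  have Dlo: "D \<ge> 1 - r2\<^sup>2" unfolding D using rr2 rr2' by (simp add: power_mono)
  have Dhi: "D \<le> 1" unfolding D by simp
  have r2sq: "1 - r2\<^sup>2 > 0" using r2 sq_lt1[of r2] by simp
  have Dpos: "D > 0" using Dlo r2sq by linarith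
  have Nlo: "N \<ge> (1 - r2\<^sup>2) * r - (1 - r\<^sup>2) * r2"
  proof -
    have "cmod (complex_of_real (1 - (cmod p2)\<^sup>2) * p1) - cmod (complex_of_real (1 - (cmod p1)\<^sup>2) * p2) \<le> N"
      unfolding N_def by (rule norm_diff_ineq)
    moreover have "cmod (complex_of_real (1 - (cmod p2)\<^sup>2) * p1) = (1 - r2\<^sup>2) * r"
      unfolding norm_mult n1 n2 using r2sq by (simp only: cm[OF less_imp_le[OF r2sq]])
    moreover have "1 - r\<^sup>2 \<ge> 0" using r rpos by (simp add: power_le_one)
    then have "cmod (complex_of_real (1 - (cmod p1)\<^sup>2) * p2) = (1 - r\<^sup>2) * r2"
      unfolding norm_mult n1 n2 by (simp only: cm)
    ultimately show ?thesis by linarith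
  qed
  have key: "D - ((1 - r2\<^sup>2) * r - (1 - r\<^sup>2) * r2) = (1 - r) * (1 + r * r2\<^sup>2 + r2 * (1 + r))"
    unfolding D by (simp add: algebra_simps power2_eq_square)
  have "1 + r * r2\<^sup>2 + r2 * (1 + r) \<le> (1 + r2)\<^sup>2"
  proof -
    have "r * r2\<^sup>2 \<le> r2\<^sup>2" using r rpos by (intro mult_left_le_one_le) auto
    moreover have "r2 * (1 + r) \<le> 2 * r2" using r r2 by simp
    ultimately show ?thesis by (simp add: power2_eq_square algebra_simps)
  qed
  then have DN: "D - N \<le> (1 - r) * (1 + r2)\<^sup>2"
    using key Nlo mult_left_mono[of _ _ "1 - r"] r by (smt (verit))
  have oneminus: "1 - rho_p p1 p2 = (D - N) / D" unfolding rho using Dpos by (simp add: field_simps)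
  have "1 - rho_p p1 p2 \<le> (1 - r) * (1 + r2)\<^sup>2 / D" unfolding oneminus
    using DN Dpos by (simp add: divide_right_mono)
  also have "\<dots> \<le> (1 - r) * (1 + r2)\<^sup>2 / (1 - r2\<^sup>2)"
    using Dlo r2sq r by (intro divide_left_mono) auto
  also have "\<dots> = C * (1 - r)"
  proof -
    have f: "1 - r2\<^sup>2 = (1 - r2) * (1 + r2)" by (simp add: power2_eq_square algebra_simps)
    have "1 - r2 \<noteq> 0" using r2 by auto
    then have "(1 + r2)\<^sup>2 = C * (1 - r2\<^sup>2)" unfolding C_def f by (simp add: power2_eq_square)
    then show ?thesis using r2sq by simp
  qed
  finally have rhoC: "1 - rho_p p1 p2 \<le> C * (1 - r)" .
  have rho1: "1 - rho_p p1 p2 > 0" using R by simp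
  have P: "(C * (1 - r)) powr (-3/2) \<le> (1 - rho_p p1 p2) powr (-3/2)"
    by (rule powr_mono2') (use rho1 rhoC in auto)
  have "(1 - r) * (C * (1 - r)) powr (-3/2) = C powr (-3/2) * ((1 - r) powr 1 * (1 - r) powr (-3/2))"
    using r C by (simp add: powr_mult)
  also have "\<dots> = C powr (-3/2) * (1 - r) powr (-1/2)"
  proof -
    have "(1 - r) powr 1 * (1 - r) powr (-3/2) = (1 - r) powr (1 + -3/2)" by (rule powr_add[symmetric])
    moreover have "(1::real) + -3/2 = -1/2" by simp
    ultimately show ?thesis by simp
  qed
  finally have F6: "C powr (-3/2) * (1 - r) powr (-1/2) \<le> (1 - (cmod p1)\<^sup>2) * (1 - rho_p p1 p2) powr (-3/2)"
  proof -
    assume eq: "(1 - r) * (C * (1 - r)) powr (-3/2) = C powr (-3/2) * (1 - r) powr (-1/2)"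
    have "1 - r \<le> 1 - r\<^sup>2 + 0" using r rpos by (simp add: power2_eq_square)
    then have "(1 - r) * (C * (1 - r)) powr (-3/2) \<le> (1 - r\<^sup>2) * (1 - rho_p p1 p2) powr (-3/2)"
      using P r by (intro mult_mono) auto
    then show ?thesis unfolding n1 eq .
  qed
  have F1: "(1 - r2)\<^sup>2 \<le> (cmod (1 - p1 * cnj p2))\<^sup>2 / (1 - (cmod (p1 * cnj p2))\<^sup>2) ^ 3"
  proof -
    have "1 - r2 \<le> 1 - r * r2" using rr2 by simp
    also have "1 - r * r2 \<le> cmod (1 - p1 * cnj p2)"
      using norm_triangle_ineq2[of 1 "p1 * cnj p2"] nw by simp
    finally have "(1 - r2)\<^sup>2 \<le> (cmod (1 - p1 * cnj p2))\<^sup>2" using r2 by (simp add: power_mono)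
    also have "\<dots> \<le> (cmod (1 - p1 * cnj p2))\<^sup>2 / D ^ 3"
    proof -
      have d3: "D ^ 3 \<le> 1" "D ^ 3 > 0" using Dpos Dhi by (simp_all add: power_le_one)
      have "(cmod (1 - p1 * cnj p2))\<^sup>2 * D ^ 3 \<le> (cmod (1 - p1 * cnj p2))\<^sup>2"
        using d3 by (intro mult_left_le) auto
      then show ?thesis using d3 by (simp add: le_divide_eq)
    qed
    finally show ?thesis unfolding D_def .
  qed
  have F2: "1 \<le> 1 / (rho_p p1 p2)\<^sup>2" using R by (simp add: power_le_one)
  have F3: "r2 * sin (mu1 - mu2) / 2 \<le> Im (p1 * cnj p2)"
    unfolding Im using rpos r2 s by (simp add: mult_right_mono)
  have F4: "(1 - r2) / 4 \<le> (cmod p1)\<^sup>2 - (cmod p2)\<^sup>2"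
  proof -
    have "(cmod p1)\<^sup>2 - (cmod p2)\<^sup>2 = (r - r2) * (r + r2)" unfolding n1 n2 by (simp add: algebra_simps power2_eq_square)
    moreover have "r - r2 \<ge> (1 - r2) / 2" using r by simp
    moreover have "r + r2 \<ge> 1/2" using rpos r2 by simp
    ultimately show ?thesis using r2 mult_mono[of "(1 - r2) / 2" "r - r2" "1/2" "r + r2"] by simp
  qed
  have F5: "1 - r2\<^sup>2 \<le> 1 - (cmod p2)\<^sup>2" unfolding n2 by simp
  have "(1 - r2)\<^sup>2 * 1 * (r2 * sin (mu1 - mu2) / 2) * ((1 - r2) / 4) * (1 - r2\<^sup>2)
            * (C powr (-3/2) * (1 - r) powr (-1/2))
      \<le> ((cmod (1 - p1 * cnj p2))\<^sup>2 / (1 - (cmod (p1 * cnj p2))\<^sup>2) ^ 3) * (1 / (rho_p p1 p2)\<^sup>2)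
         * Im (p1 * cnj p2) * ((cmod p1)\<^sup>2 - (cmod p2)\<^sup>2) * (1 - (cmod p2)\<^sup>2)
         * ((1 - (cmod p1)\<^sup>2) * (1 - rho_p p1 p2) powr (-3/2))"
    by (rule prod6_mono[OF _ F1 _ F2 _ F3 _ F4 _ F5 _ F6]) (use r2 s r r2sq C in auto)
  also have "\<dots> = skew p1 p2" unfolding skew_def by (simp only: mult.assoc mult.commute mult.left_commute)
  finally show ?thesis unfolding C_def by (simp only: mult.assoc)
qed



lemma lim_pos: assumes "0 < r2" "r2 < 1" "sin (mu1 - mu2) > 0"
  shows "filterlim (\<lambda>r1. skew (complex_of_real r1 * cis mu1) (complex_of_real r2 * cis mu2)) at_top (at_left 1)"
proof -
  define M where "M = (1 - r2)\<^sup>2 * 1 * (r2 * sin (mu1 - mu2) / 2) * ((1 - r2) / 4) * (1 - r2\<^sup>2)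
            * ((1 + r2) / (1 - r2)) powr (-3/2)"
  have "1 - r2\<^sup>2 > 0" using assms sq_lt1[of r2] by simp
  then have M: "M > 0" unfolding M_def using assms by simp
  have L: "filterlim (\<lambda>r. M * (1 - r) powr (-1/2)) at_top (at_left 1)"
    by (rule filterlim_tendsto_pos_mult_at_top[OF tendsto_const M lim_root])
  have "eventually (\<lambda>r. r \<in> {(1 + r2)/2<..<1}) (at_left (1::real))"
    by (rule eventually_at_left_real) (use assms in simp)
  then have "eventually (\<lambda>r. M * (1 - r) powr (-1/2) \<le> skew (complex_of_real r * cis mu1) (complex_of_real r2 * cis mu2)) (at_left 1)"
  proof (rule eventually_mono)
    fix r assume "r \<in> {(1 + r2)/2<..<1}"
    then show "M * (1 - r) powr (-1/2) \<le> skew (complex_of_real r * cis mu1) (complex_of_real r2 * cis mu2)"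
      unfolding M_def using lim_bound[of r2 mu1 mu2 r] assms by auto
  qed
  from filterlim_at_top_mono[OF L this] show ?thesis .
qed

lemma lim_neg: assumes "0 < r2" "r2 < 1" "sin (mu1 - mu2) < 0"
  shows "filterlim (\<lambda>r1. skew (complex_of_real r1 * cis mu1) (complex_of_real r2 * cis mu2)) at_bot (at_left 1)"
proof -
  have s: "sin ((-mu1) - (-mu2)) > 0" using assms(3)
    by (metis minus_diff_eq neg_0_less_iff_less sin_minus diff_minus_eq_add add.commute diff_conv_add_uminus)
  have e: "skew (complex_of_real r1 * cis mu1) (complex_of_real r2 * cis mu2)
     = - skew (complex_of_real r1 * cis (-mu1)) (complex_of_real r2 * cis (-mu2))" for r1
  proof -
    have "skew (complex_of_real r1 * cis mu1) (complex_of_real r2 * cis mu2)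
      = skew (cnj (complex_of_real r1 * cis (-mu1))) (cnj (complex_of_real r2 * cis (-mu2)))"
      by (simp add: cis_cnj)
    then show ?thesis by (simp only: skew_cnj)
  qed
  show ?thesis unfolding e filterlim_uminus_at_bot minus_minus
    using lim_pos[OF assms(1,2) s] .
qed

lemma sign_sq: fixes x y m :: real assumes "0 \<le> x" "0 \<le> y"
  shows "(0 < m * (x\<^sup>2 - y\<^sup>2) \<longleftrightarrow> 0 < m * (x - y)) \<and> (m * (x\<^sup>2 - y\<^sup>2) < 0 \<longleftrightarrow> m * (x - y) < 0)"
proof (cases "x + y = 0")
  case True
  then have "x = 0" "y = 0" using assms by auto
  then show ?thesis by simp
next
  case False
  then have p: "x + y > 0" using assms by simp
  have e: "m * (x\<^sup>2 - y\<^sup>2) = (m * (x - y)) * (x + y)" by (simp add: algebra_simps power2_eq_square)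
  show ?thesis unfolding e using p by (simp add: zero_less_mult_iff mult_less_0_iff)
qed

lemma claim1: assumes "p1 \<in> unit_disc" "p2 \<in> unit_disc" "p1 \<noteq> - p2"
  shows "skew p1 p2 = 0 \<longleftrightarrow> symmetric_circ (dens p1 p2)"
proof -
  obtain K where K: "K > 0" "skew p1 p2 = K * (Im (p1 * cnj p2) * ((cmod p1)\<^sup>2 - (cmod p2)\<^sup>2))"
    using skew_K[OF assms] by blast
  show ?thesis
    using K sym_imp_zero[OF assms(1,2)] zero_imp_sym[of p1 p2] by auto
qed

lemma claim2: assumes "p1 \<in> unit_disc" "p2 \<in> unit_disc" "p1 \<noteq> - p2"
  shows "(skew p1 p2 > 0 \<longleftrightarrow> Im (p1 * cnj p2) * (cmod p1 - cmod p2) > 0)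
          \<and> (skew p1 p2 < 0 \<longleftrightarrow> Im (p1 * cnj p2) * (cmod p1 - cmod p2) < 0)"
proof -
  obtain K where K: "K > 0" "skew p1 p2 = K * (Im (p1 * cnj p2) * ((cmod p1)\<^sup>2 - (cmod p2)\<^sup>2))"
    using skew_K[OF assms] by blast
  have "(skew p1 p2 > 0 \<longleftrightarrow> Im (p1 * cnj p2) * ((cmod p1)\<^sup>2 - (cmod p2)\<^sup>2) > 0)
      \<and> (skew p1 p2 < 0 \<longleftrightarrow> Im (p1 * cnj p2) * ((cmod p1)\<^sup>2 - (cmod p2)\<^sup>2) < 0)"
    unfolding K(2) using K(1) by (simp add: zero_less_mult_iff mult_less_0_iff)
  then show ?thesis using sign_sq[of "cmod p1" "cmod p2" "Im (p1 * cnj p2)"] by simp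
qed

theorem theorem5:
  shows "(\<forall>p1 p2. p1 \<in> unit_disc \<and> p2 \<in> unit_disc \<and> p1 \<noteq> - p2 \<longrightarrow>
            (skew p1 p2 = 0 \<longleftrightarrow> symmetric_circ (dens p1 p2)))
    \<and> (\<forall>p1 p2. p1 \<in> unit_disc \<and> p2 \<in> unit_disc \<and> p1 \<noteq> - p2 \<longrightarrow>
            (skew p1 p2 > 0 \<longleftrightarrow> Im (p1 * cnj p2) * (cmod p1 - cmod p2) > 0)
          \<and> (skew p1 p2 < 0 \<longleftrightarrow> Im (p1 * cnj p2) * (cmod p1 - cmod p2) < 0))
    \<and> (\<forall>p1 p2. p1 \<in> unit_disc \<and> p2 \<in> unit_disc \<and> p1 \<noteq> - p2 \<and> p1 \<noteq> 0 \<and> p2 \<noteq> 0 \<longrightarrow>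
            skew p1 p2 = - skew p1 (cnj p2 * p1\<^sup>2 / complex_of_real ((cmod p1)\<^sup>2))
          \<and> skew p1 p2 = - skew (cnj p1 * p2\<^sup>2 / complex_of_real ((cmod p2)\<^sup>2)) p2)
    \<and> (\<forall>p1 p2. p1 \<in> unit_disc \<and> p2 \<in> unit_disc \<and> p1 \<noteq> - p2 \<longrightarrow>
            skew p2 p1 = skew p1 p2)
    \<and> (\<forall>p1 p2. p1 \<in> unit_disc \<and> p2 \<in> unit_disc \<and> p1 \<noteq> - p2 \<longrightarrow>
            skew (cnj p1) (cnj p2) = - skew p1 p2)
    \<and> (\<forall>p1 p2 \<alpha>. p1 \<in> unit_disc \<and> p2 \<in> unit_disc \<and> p1 \<noteq> - p2 \<and> cmod \<alpha> = 1 \<longrightarrow>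
            skew (\<alpha> * p1) (\<alpha> * p2) = skew p1 p2)
    \<and> (\<forall>r2 \<mu>1 \<mu>2. 0 < r2 \<and> r2 < 1 \<longrightarrow>
            (sin (\<mu>1 - \<mu>2) > 0 \<longrightarrow>
               filterlim (\<lambda>r1. skew (complex_of_real r1 * cis \<mu>1) (complex_of_real r2 * cis \<mu>2))
                 at_top (at_left 1))
          \<and> (sin (\<mu>1 - \<mu>2) < 0 \<longrightarrow>
               filterlim (\<lambda>r1. skew (complex_of_real r1 * cis \<mu>1) (complex_of_real r2 * cis \<mu>2))
                 at_bot (at_left 1)))"
proof (intro conjI allI impI)
  fix p1 p2 assume a: "p1 \<in> unit_disc \<and> p2 \<in> unit_disc \<and> p1 \<noteq> - p2"
  then show "skew p1 p2 = 0 \<longleftrightarrow> symmetric_circ (dens p1 p2)" using claim1 by blast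
next
  fix p1 p2 assume a: "p1 \<in> unit_disc \<and> p2 \<in> unit_disc \<and> p1 \<noteq> - p2"
  then show "(skew p1 p2 > 0 \<longleftrightarrow> Im (p1 * cnj p2) * (cmod p1 - cmod p2) > 0)"
    using claim2 by blast
next
  fix p1 p2 assume a: "p1 \<in> unit_disc \<and> p2 \<in> unit_disc \<and> p1 \<noteq> - p2"
  then show "(skew p1 p2 < 0 \<longleftrightarrow> Im (p1 * cnj p2) * (cmod p1 - cmod p2) < 0)"
    using claim2 by blast
next
  fix p1 p2 assume a: "p1 \<in> unit_disc \<and> p2 \<in> unit_disc \<and> p1 \<noteq> - p2 \<and> p1 \<noteq> 0 \<and> p2 \<noteq> 0"
  then show "skew p1 p2 = - skew p1 (cnj p2 * p1\<^sup>2 / complex_of_real ((cmod p1)\<^sup>2))"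
    using skew_refl[of p1 p2] by simp
next
  fix p1 p2 assume a: "p1 \<in> unit_disc \<and> p2 \<in> unit_disc \<and> p1 \<noteq> - p2 \<and> p1 \<noteq> 0 \<and> p2 \<noteq> 0"
  then show "skew p1 p2 = - skew (cnj p1 * p2\<^sup>2 / complex_of_real ((cmod p2)\<^sup>2)) p2"
    using skew_refl[of p2 p1] skew_sym[of p1 p2] skew_sym[of p2 "cnj p1 * p2\<^sup>2 / complex_of_real ((cmod p2)\<^sup>2)"]
    by simp
next
  fix p1 p2 show "skew p2 p1 = skew p1 p2" by (rule skew_sym)
next
  fix p1 p2 show "skew (cnj p1) (cnj p2) = - skew p1 p2" by (rule skew_cnj)
next
  fix p1 p2 \<alpha> assume "p1 \<in> unit_disc \<and> p2 \<in> unit_disc \<and> p1 \<noteq> - p2 \<and> cmod \<alpha> = 1"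
  then show "skew (\<alpha> * p1) (\<alpha> * p2) = skew p1 p2" using skew_rot by blast
next
  fix r2 \<mu>1 \<mu>2 :: real assume "0 < r2 \<and> r2 < 1" "sin (\<mu>1 - \<mu>2) > 0"
  then show "filterlim (\<lambda>r1. skew (complex_of_real r1 * cis \<mu>1) (complex_of_real r2 * cis \<mu>2))
                 at_top (at_left 1)" using lim_pos by blast
next
  fix r2 \<mu>1 \<mu>2 :: real assume "0 < r2 \<and> r2 < 1" "sin (\<mu>1 - \<mu>2) < 0"
  then show "filterlim (\<lambda>r1. skew (complex_of_real r1 * cis \<mu>1) (complex_of_real r2 * cis \<mu>2))
                 at_bot (at_left 1)" using lim_neg by blast
qed


end
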